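(* For every $k\in\mathbb{N}$, $$L_{\mathbb{R},4k}\ge\left[\sum_{j=0}^{2k}\binom{4k}{2j}\left|\frac{B_j}{\binom{4k}{2j}}\right|^{\frac{8k}{4k+1}}\right]^{\frac{4k+1}{8k}},$$ where $$B_j=\sum_{\ell=0}^{\lfloor j/2\rfloor}\frac{k!\,(-3)^{j-2\ell}}{\ell!\,(j-2\ell)!\,(k-j+\ell)!},\qquad j=0,\dots,2k$$ (terms with $k-j+\ell<0$ being $0$); the $B_j$ are the coefficients of $x^{2j}y^{4k-2j}$ in $(x^4+y^4-3x^2y^2)^k$.
   Context: All spaces are real. $\check P$ is the polar of an $m$-homogeneous polynomial $P$ (the unique symmetric $m$-linear form with $\check P(x,\dots,x)=P(x)$). For $x_1,\dots,x_N$ in a Banach space $X$, $\|(x_j)\|_{w,1}=\sup\{\sum_j|\varphi(x_j)|:\varphi\in X',\|\varphi\|\le1\}$. $L_{\mathbb{R},m}$ is the smallest constant $L$ such that for every real Banach space $X$, every continuous $m$-homogeneous $P:X\to\mathbb{R}$, every $N$ and all $x^{(k)}_j\in X$: $\big(\sum_{j_1,\dots,j_m=1}^N|\check P(x^{(1)}_{j_1},\dots,x^{(m)}_{j_m})|^{\frac{2m}{m+1}}\big)^{\frac{m+1}{2m}}\le L\|P\|\prod_{k=1}^m\|(x^{(k)}_j)_{j=1}^N\|_{w,1}$. $\lfloor h\rfloor$ is the integer part. *)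

theory Defs
  imports "HOL-Analysis.Analysis"
begin

lemma nat_real_dist_lt1: "\<bar>real (a::nat) - real b\<bar> < 1 \<Longrightarrow> a = b"
proof (rule ccontr)
  assume h: "\<bar>real a - real b\<bar> < 1" "a \<noteq> b"
  then have "a + 1 \<le> b \<or> b + 1 \<le> a" by arith
  then have "real a + 1 \<le> real b \<or> real b + 1 \<le> real a"
    by (metis of_nat_1 of_nat_add of_nat_le_iff)
  then show False using h(1) by linarith
qed

text \<open>The usual (discrete) metric on nat, so that nat =>C real is the space
  l-infinity of bounded real sequences.\<close>
instantiation nat :: metric_space
begin
definition dist_nat :: "nat \<Rightarrow> nat \<Rightarrow> real" where
  "dist_nat m n = \<bar>real m - real n\<bar>"
definition uniformity_nat :: "(nat \<times> nat) filter" where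
  "uniformity_nat = (INF e\<in>{0 <..}. principal {(x, y). dist x y < e})"
instance
proof
  fix U :: "nat set"
  have "eventually (\<lambda>(x', y). x' = x \<longrightarrow> y \<in> U) (uniformity::(nat\<times>nat) filter)"
    if "x \<in> U" for x
  proof -
    have "eventually (\<lambda>(a, b). dist a b < (1::real)) (uniformity::(nat\<times>nat) filter)"
      unfolding uniformity_nat_def
      by (rule eventually_INF1[of 1]) (auto simp: eventually_principal)
    then show ?thesis
      by (rule eventually_mono) (use that nat_real_dist_lt1 in \<open>fastforce simp: dist_nat_def\<close>)
  qed
  then show "open U \<longleftrightarrow> (\<forall>x\<in>U. eventually (\<lambda>(x', y). x' = x \<longrightarrow> y \<in> U) uniformity)"
    by (simp add: open_discrete)
qed (auto simp: dist_nat_def uniformity_nat_def)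
end

instance bcontfun :: (metric_space, banach) banach ..

text \<open>An m-linear form on a real vector space: a function of an argument tuple
  (indexed by 0..<m, represented as nat => 'a), linear in each argument and
  independent of the coordinates >= m.\<close>
definition mlinear :: "nat \<Rightarrow> ((nat \<Rightarrow> 'a::real_vector) \<Rightarrow> real) \<Rightarrow> bool" where
  "mlinear m A \<longleftrightarrow>
     (\<forall>v w. (\<forall>i<m. v i = w i) \<longrightarrow> A v = A w) \<and>
     (\<forall>i<m. \<forall>v. linear (\<lambda>y. A (v(i := y))))"

definition sym_mlinear :: "nat \<Rightarrow> ((nat \<Rightarrow> 'a::real_vector) \<Rightarrow> real) \<Rightarrow> bool" where
  "sym_mlinear m A \<longleftrightarrow> mlinear m A \<and>
     (\<forall>\<sigma> v. \<sigma> permutes {..<m} \<longrightarrow> A (v \<circ> \<sigma>) = A v)"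

definition homog_poly :: "nat \<Rightarrow> ('a::real_vector \<Rightarrow> real) \<Rightarrow> bool" where
  "homog_poly m P \<longleftrightarrow> (\<exists>A. mlinear m A \<and> (\<forall>x. P x = A (\<lambda>_. x)))"

definition polar :: "nat \<Rightarrow> ('a::real_vector \<Rightarrow> real) \<Rightarrow> (nat \<Rightarrow> 'a) \<Rightarrow> real" where
  "polar m P = (THE A. sym_mlinear m A \<and> (\<forall>x. A (\<lambda>_. x) = P x))"

definition poly_norm :: "('a::real_normed_vector \<Rightarrow> real) \<Rightarrow> real" where
  "poly_norm P = Sup {\<bar>P x\<bar> | x. norm x \<le> 1}"

definition weak1_norm :: "nat \<Rightarrow> (nat \<Rightarrow> 'a::real_normed_vector) \<Rightarrow> real" where
  "weak1_norm N x = Sup {(\<Sum>j<N. \<bar>\<phi> (x j)\<bar>) | \<phi>::'a \<Rightarrow> real. bounded_linear \<phi> \<and> onorm \<phi> \<le> 1}"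

definition BH_holds :: "'a::banach itself \<Rightarrow> nat \<Rightarrow> real \<Rightarrow> bool" where
  "BH_holds (_::'a itself) m L \<longleftrightarrow>
     (\<forall>(P::'a \<Rightarrow> real) N (x::nat \<Rightarrow> nat \<Rightarrow> 'a).
        homog_poly m P \<and> continuous_on UNIV P \<longrightarrow>
        (\<Sum>j\<in>PiE {..<m} (\<lambda>_. {..<N}).
            \<bar>polar m P (\<lambda>i. x i (j i))\<bar> powr (2 * real m / (real m + 1)))
          powr ((real m + 1) / (2 * real m))
        \<le> L * poly_norm P * (\<Prod>i<m. weak1_norm N (x i)))"

definition Bcoef :: "nat \<Rightarrow> nat \<Rightarrow> real" where
  "Bcoef k j = (\<Sum>l\<le>j div 2.
      if j \<le> k + l
      then fact k * (-3) ^ (j - 2 * l) / (fact l * fact (j - 2 * l) * fact (k + l - j))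
      else 0)"

end

theory Submission
  imports Defs "HOL-Computational_Algebra.Polynomial"
begin

lemma mlinear_indep: "mlinear m A \<Longrightarrow> (\<And>i. i < m \<Longrightarrow> v i = w i) \<Longrightarrow> A v = A w"
  unfolding mlinear_def by blast

lemma mlinear_lin: "mlinear m A \<Longrightarrow> i < m \<Longrightarrow> linear (\<lambda>y. A (v(i := y)))"
  unfolding mlinear_def by blast

lemma mlinear_psi:
  fixes D :: "(nat \<Rightarrow> 'a::real_vector) \<Rightarrow> real"
  assumes D: "mlinear m D"
  shows "n \<le> m \<Longrightarrow> \<exists>p. (\<forall>t. D (\<lambda>i. if i < n then x + t *\<^sub>R y else w i) = poly p t) \<and>
      coeff p 0 = D (\<lambda>i. if i < n then x else w i) \<and>
      coeff p 1 = (\<Sum>j<n. D (\<lambda>i. if i < n then (if i = j then y else x) else w i))"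
proof (induction n arbitrary: w)
  case 0
  show ?case by (rule exI[of _ "[:D w:]"]) simp
next
  case (Suc n)
  have nm: "n < m" "n \<le> m" using Suc.prems by auto
  obtain px where px: "\<forall>t. D (\<lambda>i. if i < n then x + t *\<^sub>R y else (w(n := x)) i) = poly px t"
    "coeff px 0 = D (\<lambda>i. if i < n then x else (w(n := x)) i)"
    "coeff px 1 = (\<Sum>j<n. D (\<lambda>i. if i < n then (if i = j then y else x) else (w(n := x)) i))"
    using Suc.IH[OF nm(2), of "w(n := x)"] by blast
  obtain py where py: "\<forall>t. D (\<lambda>i. if i < n then x + t *\<^sub>R y else (w(n := y)) i) = poly py t"
    "coeff py 0 = D (\<lambda>i. if i < n then x else (w(n := y)) i)"
    "coeff py 1 = (\<Sum>j<n. D (\<lambda>i. if i < n then (if i = j then y else x) else (w(n := y)) i))"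
    using Suc.IH[OF nm(2), of "w(n := y)"] by blast
  show ?case
  proof (rule exI[of _ "px + pCons 0 py"], intro conjI allI)
    fix t
    define u where "u = (\<lambda>i. if i < n then x + t *\<^sub>R y else w i)"
    have e1: "(\<lambda>i. if i < Suc n then x + t *\<^sub>R y else w i) = u(n := x + t *\<^sub>R y)"
      by (auto simp: u_def)
    have lin: "linear (\<lambda>z. D (u(n := z)))" by (rule mlinear_lin[OF D nm(1)])
    have "D (u(n := x + t *\<^sub>R y)) = D (u(n := x)) + t * D (u(n := y))"
      using real_vector.linear_add[OF lin] real_vector.linear_scale[OF lin] by simp
    moreover have "u(n := x) = (\<lambda>i. if i < n then x + t *\<^sub>R y else (w(n := x)) i)"
      by (auto simp: u_def)
    moreover have "u(n := y) = (\<lambda>i. if i < n then x + t *\<^sub>R y else (w(n := y)) i)"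
      by (auto simp: u_def)
    ultimately show "D (\<lambda>i. if i < Suc n then x + t *\<^sub>R y else w i) = poly (px + pCons 0 py) t"
      using e1 px(1) py(1) by simp
  next
    have "(\<lambda>i. if i < n then x else (w(n := x)) i) = (\<lambda>i. if i < Suc n then x else w i)"
      by auto
    then show "coeff (px + pCons 0 py) 0 = D (\<lambda>i. if i < Suc n then x else w i)"
      using px(2) by simp
  next
    have a: "(\<lambda>i. if i < n then (if i = j then y else x) else (w(n := x)) i) =
          (\<lambda>i. if i < Suc n then (if i = j then y else x) else w i)" if "j < n" for j
      using that by auto
    have b: "(\<lambda>i. if i < n then x else (w(n := y)) i) =
          (\<lambda>i. if i < Suc n then (if i = n then y else x) else w i)"
      by auto
    show "coeff (px + pCons 0 py) 1 =
        (\<Sum>j<Suc n. D (\<lambda>i. if i < Suc n then (if i = j then y else x) else w i))"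
      using px(3) py(2) a b by (simp add: coeff_pCons)
  qed
qed

lemma sym_mlinear_zero:
  fixes D :: "(nat \<Rightarrow> 'a::real_vector) \<Rightarrow> real"
  shows "sym_mlinear m D \<Longrightarrow> (\<forall>x. D (\<lambda>_. x) = 0) \<Longrightarrow> D v = 0"
proof (induction m arbitrary: D v)
  case 0
  then have "mlinear 0 D" unfolding sym_mlinear_def by simp
  then have "D v = D (\<lambda>_. 0)" by (rule mlinear_indep) simp
  moreover have "D (\<lambda>_. 0) = 0" using 0(2) by blast
  ultimately show ?case by simp
next
  case (Suc m)
  have D: "mlinear (Suc m) D" and Dsym: "\<And>\<sigma> v. \<sigma> permutes {..<Suc m} \<Longrightarrow> D (v \<circ> \<sigma>) = D v"
    using Suc.prems unfolding sym_mlinear_def by auto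
  define y where "y = v m"
  define E where "E = (\<lambda>u. D (u(m := y)))"
  have mE: "mlinear m E"
    unfolding mlinear_def
  proof (intro conjI allI impI)
    fix u w :: "nat \<Rightarrow> 'a" assume h: "\<forall>i<m. u i = w i"
    show "E u = E w" unfolding E_def by (rule mlinear_indep[OF D]) (use h in auto)
  next
    fix i u assume "i < m"
    then have "i \<noteq> m" by simp
    have lin: "linear (\<lambda>z. D ((u(m := y))(i := z)))" using \<open>i < m\<close> by (intro mlinear_lin[OF D]) auto
    have eq: "(\<lambda>z. E (u(i := z))) = (\<lambda>z. D ((u(m := y))(i := z)))"
    proof -
      have "(u(i:=z))(m:=y) = (u(m:=y))(i:=z)" for z using \<open>i \<noteq> m\<close> by (auto simp: fun_eq_iff)
      then show ?thesis unfolding E_def by simp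
    qed
    show "linear (\<lambda>z. E (u(i := z)))" unfolding eq by (rule lin)
  qed
  have sE: "E (u \<circ> \<sigma>) = E u" if "\<sigma> permutes {..<m}" for \<sigma> u
  proof -
    have s: "\<sigma> permutes {..<Suc m}" by (rule permutes_subset[OF that]) auto
    have sm: "\<sigma> m = m" by (rule permutes_not_in[OF that]) simp
    have "((u \<circ> \<sigma>)(m := y)) i = ((u(m := y)) \<circ> \<sigma>) i" for i
    proof (cases "i = m")
      case True then show ?thesis using sm by simp
    next
      case False
      then have "\<sigma> i \<noteq> m" using sm permutes_inj[OF that] by (metis injD)
      then show ?thesis using False by simp
    qed
    then have "(u \<circ> \<sigma>)(m := y) = (u(m := y)) \<circ> \<sigma>" by (rule ext)
    then show ?thesis unfolding E_def using Dsym[OF s] by simp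
  qed
  have dE: "E (\<lambda>_. x) = 0" for x
  proof -
    obtain p where p: "\<forall>t. D (\<lambda>i. if i < Suc m then x + t *\<^sub>R y else v i) = poly p t"
      "coeff p 1 = (\<Sum>j<Suc m. D (\<lambda>i. if i < Suc m then (if i = j then y else x) else v i))"
      using mlinear_psi[OF D, of "Suc m" x y v] by auto
    have "D (\<lambda>i. if i < Suc m then x + t *\<^sub>R y else v i) = D (\<lambda>_. x + t *\<^sub>R y)" for t
      by (rule mlinear_indep[OF D]) auto
    then have "\<forall>t. poly p t = 0" using p(1) Suc.prems(2) by simp
    then have "p = 0" using poly_all_0_iff_0 by blast
    have eq: "D (\<lambda>i. if i < Suc m then (if i = j then y else x) else v i) = E (\<lambda>_. x)" if "j < Suc m" for j
    proof -
      let ?u = "\<lambda>i. if i < Suc m then (if i = m then y else x) else v i"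
      have t: "Transposition.transpose j m permutes {..<Suc m}" using that by (intro permutes_swap_id) auto
      have "(\<lambda>i. if i < Suc m then (if i = j then y else x) else v i) = ?u \<circ> Transposition.transpose j m"
        using that by (auto simp: fun_eq_iff Transposition.transpose_def)
      then have "D (\<lambda>i. if i < Suc m then (if i = j then y else x) else v i) = D ?u"
        using Dsym[OF t] by simp
      also have "\<dots> = E (\<lambda>_. x)" unfolding E_def by (rule mlinear_indep[OF D]) auto
      finally show ?thesis .
    qed
    have "0 = (\<Sum>j<Suc m. E (\<lambda>_. x))" using p(2) \<open>p = 0\<close> eq by simp
    then show ?thesis by simp
  qed
  have "sym_mlinear m E" unfolding sym_mlinear_def using mE sE by simp
  then have "E v = 0" using Suc.IH[of E] dE by simp
  moreover have "E v = D v" unfolding E_def y_def by simp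
  ultimately show ?case by simp
qed

lemma polar_eqI:
  fixes A :: "(nat \<Rightarrow> 'a::real_vector) \<Rightarrow> real"
  assumes A: "sym_mlinear m A" and P: "\<And>x. A (\<lambda>_. x) = P x"
  shows "polar m P = A"
  unfolding polar_def
proof (rule the_equality)
  show "sym_mlinear m A \<and> (\<forall>x. A (\<lambda>_. x) = P x)" using A P by auto
next
  fix B assume B: "sym_mlinear m B \<and> (\<forall>x. B (\<lambda>_. x) = P x)"
  have "sym_mlinear m (\<lambda>v. B v - A v)"
  proof -
    have mA: "mlinear m A" and mB: "mlinear m B" using A B unfolding sym_mlinear_def by auto
    have "mlinear m (\<lambda>v. B v - A v)" unfolding mlinear_def
    proof (intro conjI allI impI)
      fix v w :: "nat \<Rightarrow> 'a" assume h: "\<forall>i<m. v i = w i"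
      show "B v - A v = B w - A w"
        using mlinear_indep[OF mA, of v w] mlinear_indep[OF mB, of v w] h by simp
    next
      fix i v assume "i < m"
      show "linear (\<lambda>y. B (v(i := y)) - A (v(i := y)))"
        by (intro real_vector.module_hom_sub mlinear_lin[OF mB \<open>i < m\<close>] mlinear_lin[OF mA \<open>i < m\<close>])
    qed
    then show ?thesis using A B unfolding sym_mlinear_def by auto
  qed
  then have "B v - A v = 0" for v
    by (rule sym_mlinear_zero) (use B P in auto)
  then show "B = A" by auto
qed

lemma Bcoef_identity:
  fixes s t :: real
  shows "(\<Sum>j = 0..2*k. Bcoef k j * s ^ j * t ^ (2*k - j)) = (s^2 + t^2 - 3 * s * t) ^ k"
proof -
  define T1 where "T1 = (\<lambda>(l, c). real (k choose l) * real ((k - l) choose c) * (-3) ^ c * s ^ (2*l + c) * t ^ (2*k - 2*l - c))"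
  define T2 where "T2 = (\<lambda>(j, l). fact k * (-3) ^ (j - 2 * l) / (fact l * fact (j - 2 * l) * fact (k + l - j)) * s ^ j * t ^ (2*k - j) :: real)"
  have "(s^2 + t^2 - 3 * s * t) ^ k = (s^2 + t * (-3 * s + t)) ^ k" by (simp add: algebra_simps power2_eq_square)
  also have "\<dots> = (\<Sum>l\<le>k. real (k choose l) * (s^2)^l * (t * (-3 * s + t)) ^ (k - l))"
    by (rule binomial_ring)
  also have "\<dots> = (\<Sum>l\<le>k. \<Sum>c\<le>k - l. T1 (l, c))"
  proof (rule sum.cong[OF refl])
    fix l assume l: "l \<in> {..k}"
    have "(t * (-3 * s + t)) ^ (k - l) = t ^ (k - l) * (\<Sum>c\<le>k - l. real ((k - l) choose c) * (-3 * s)^c * t ^ (k - l - c))"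
      unfolding power_mult_distrib binomial_ring[of "-3 * s" t] ..
    then have "real (k choose l) * (s^2)^l * (t * (-3 * s + t)) ^ (k - l) =
        (\<Sum>c\<le>k - l. real (k choose l) * (s^2)^l * t ^ (k - l) * (real ((k - l) choose c) * (-3 * s)^c * t ^ (k - l - c)))"
      by (simp add: sum_distrib_left mult.assoc)
    also have "\<dots> = (\<Sum>c\<le>k - l. T1 (l, c))"
    proof (rule sum.cong[OF refl])
      fix c assume c: "c \<in> {..k - l}"
      have e1: "(s^2)^l * s^c = s ^ (2*l + c)" by (simp add: power_mult power_add)
      have e2: "t ^ (k - l) * t ^ (k - l - c) = t ^ (2*k - 2*l - c)"
      proof -
        have "k - l + (k - l - c) = 2*k - 2*l - c" using c l by auto
        then show ?thesis by (metis power_add)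
      qed
      show "real (k choose l) * (s^2)^l * t ^ (k - l) * (real ((k - l) choose c) * (-3 * s)^c * t ^ (k - l - c)) = T1 (l, c)"
      proof -
        have e0: "(-3 * s)^c = (-3)^c * s^c" by (rule power_mult_distrib)
        have "real (k choose l) * (s^2)^l * t ^ (k - l) * (real ((k - l) choose c) * (-3 * s)^c * t ^ (k - l - c))
          = real (k choose l) * real ((k - l) choose c) * (-3)^c * ((s^2)^l * s^c) * (t ^ (k - l) * t ^ (k - l - c))"
          unfolding e0 by (simp only: mult_ac)
        then show ?thesis unfolding T1_def e1 e2 by simp
      qed
    qed
    finally show "real (k choose l) * (s^2)^l * (t * (-3 * s + t)) ^ (k - l) = (\<Sum>c\<le>k - l. T1 (l, c))" .
  qed
  also have "\<dots> = sum T1 (Sigma {..k} (\<lambda>l. {..k - l}))"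
    by (subst sum.Sigma) auto
  also have "\<dots> = sum T2 {x \<in> Sigma {0..2*k} (\<lambda>j. {..j div 2}). case x of (j, l) \<Rightarrow> j \<le> k + l}"
  proof (rule sum.reindex_bij_witness[where i = "\<lambda>(j, l). (l, j - 2*l)" and j = "\<lambda>(l, c). (2*l + c, l)"])
    fix a assume "a \<in> Sigma {..k} (\<lambda>l. {..k - l})"
    then obtain l c where a: "a = (l, c)" "l \<le> k" "c \<le> k - l" by auto
    show "(case case a of (l, c) \<Rightarrow> (2 * l + c, l) of (j, l) \<Rightarrow> (l, j - 2 * l)) = a" using a by simp
    show "(case a of (l, c) \<Rightarrow> (2 * l + c, l)) \<in> {x \<in> Sigma {0..2*k} (\<lambda>j. {..j div 2}). case x of (j, l) \<Rightarrow> j \<le> k + l}"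
      using a by auto
    have f: "fact k / (fact l * fact c * fact (k - l - c)) = real (k choose l) * real ((k - l) choose c)"
      using a by (simp add: binomial_fact fact_reduce field_simps)
    have g: "k + l - (2 * l + c) = k - l - c" by simp
    have h: "T2 (2*l+c, l) = (fact k / (fact l * fact c * fact (k - l - c))) * ((-3)^c * s^(2*l+c) * t^(2*k-2*l-c))"
      unfolding T2_def using g by simp
    show "T2 (case a of (l, c) \<Rightarrow> (2 * l + c, l)) = T1 a"
    proof -
      have "T2 (case a of (l, c) \<Rightarrow> (2 * l + c, l)) = T2 (2*l+c, l)" using a by simp
      also have "\<dots> = T1 a" unfolding h f a(1) T1_def by (simp add: mult_ac)
      finally show ?thesis .
    qed
  next
    fix b assume "b \<in> {x \<in> Sigma {0..2*k} (\<lambda>j. {..j div 2}). case x of (j, l) \<Rightarrow> j \<le> k + l}"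
    then obtain j l where b: "b = (j, l)" "j \<le> 2*k" "l \<le> j div 2" "j \<le> k + l" by auto
    show "(case case b of (j, l) \<Rightarrow> (l, j - 2 * l) of (l, c) \<Rightarrow> (2 * l + c, l)) = b" using b by auto
    show "(case b of (j, l) \<Rightarrow> (l, j - 2 * l)) \<in> Sigma {..k} (\<lambda>l. {..k - l})" using b by auto
  qed
  also have "\<dots> = sum (\<lambda>x. if (case x of (j, l) \<Rightarrow> j \<le> k + l) then T2 x else 0) (Sigma {0..2*k} (\<lambda>j. {..j div 2}))"
    by (rule sum.inter_filter) auto
  also have "\<dots> = (\<Sum>j = 0..2*k. \<Sum>l\<le>j div 2. if j \<le> k + l then T2 (j, l) else 0)"
    by (subst sum.Sigma) (auto intro!: sum.cong)
  also have "\<dots> = (\<Sum>j = 0..2*k. Bcoef k j * s ^ j * t ^ (2*k - j))"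
    unfolding Bcoef_def T2_def by (auto simp: sum_distrib_right intro!: sum.cong)
  finally show ?thesis ..
qed

definition zc :: "nat \<Rightarrow> (nat \<Rightarrow> nat) \<Rightarrow> nat" where
  "zc m g = card {i \<in> {..<m}. g i = 0}"

lemma zc_le: "zc m g \<le> m"
proof -
  have "zc m g \<le> card {..<m}" unfolding zc_def by (rule card_mono) auto
  then show ?thesis by simp
qed

lemma card_zc:
  "card {g \<in> PiE {..<m} (\<lambda>_. {..<2::nat}). zc m g = r} = m choose r"
proof -
  define f' where "f' = (\<lambda>S i. if i < m then (if i \<in> S then 0 else 1) else undefined :: nat)"
  have "bij_betw (\<lambda>g. {i \<in> {..<m}. g i = 0}) {g \<in> PiE {..<m} (\<lambda>_. {..<2::nat}). zc m g = r}
     {S. S \<subseteq> {..<m} \<and> card S = r}"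
  proof (rule bij_betw_byWitness[where f' = f'])
    show "\<forall>g\<in>{g \<in> PiE {..<m} (\<lambda>_. {..<2::nat}). zc m g = r}. f' {i \<in> {..<m}. g i = 0} = g"
    proof
      fix g assume g: "g \<in> {g \<in> PiE {..<m} (\<lambda>_. {..<2::nat}). zc m g = r}"
      show "f' {i \<in> {..<m}. g i = 0} = g"
      proof
        fix i show "f' {i \<in> {..<m}. g i = 0} i = g i"
        proof (cases "i < m")
          case True
          then have "g i < 2" using g by (auto simp: PiE_iff)
          then show ?thesis using True unfolding f'_def by auto
        next
          case False then show ?thesis using g PiE_arb[of g "{..<m}" _ i] unfolding f'_def by auto
        qed
      qed
    qed
    show "\<forall>S\<in>{S. S \<subseteq> {..<m} \<and> card S = r}. {i \<in> {..<m}. f' S i = 0} = S"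
      unfolding f'_def by auto
    show "(\<lambda>g. {i \<in> {..<m}. g i = 0}) ` {g \<in> PiE {..<m} (\<lambda>_. {..<2::nat}). zc m g = r} \<subseteq> {S. S \<subseteq> {..<m} \<and> card S = r}"
      unfolding zc_def by auto
    show "f' ` {S. S \<subseteq> {..<m} \<and> card S = r} \<subseteq> {g \<in> PiE {..<m} (\<lambda>_. {..<2::nat}). zc m g = r}"
    proof
      fix g assume "g \<in> f' ` {S. S \<subseteq> {..<m} \<and> card S = r}"
      then obtain S where S: "S \<subseteq> {..<m}" "card S = r" "g = f' S" by auto
      have "{i \<in> {..<m}. g i = 0} = S" using S unfolding f'_def by auto
      moreover have "g \<in> PiE {..<m} (\<lambda>_. {..<2::nat})" using S unfolding f'_def by (auto simp: PiE_iff extensional_def)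
      ultimately show "g \<in> {g \<in> PiE {..<m} (\<lambda>_. {..<2::nat}). zc m g = r}" using S unfolding zc_def by auto
    qed
  qed
  then have "card {g \<in> PiE {..<m} (\<lambda>_. {..<2::nat}). zc m g = r} = card {S. S \<subseteq> {..<m} \<and> card S = r}"
    by (rule bij_betw_same_card)
  also have "\<dots> = m choose r" by (subst n_subsets) auto
  finally show ?thesis .
qed

lemma sum_zc:
  fixes h :: "nat \<Rightarrow> real"
  shows "(\<Sum>g\<in>PiE {..<m} (\<lambda>_. {..<2::nat}). h (zc m g)) = (\<Sum>r\<le>m. real (m choose r) * h r)"
proof -
  have "(\<Sum>g\<in>PiE {..<m} (\<lambda>_. {..<2::nat}). h (zc m g)) =
      (\<Sum>r\<le>m. \<Sum>g\<in>{g. g \<in> PiE {..<m} (\<lambda>_. {..<2::nat}) \<and> zc m g = r}. h (zc m g))"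
  proof -
    have f1: "finite (PiE {..<m} (\<lambda>_. {..<2::nat}))" by (rule finite_PiE) auto
    have im: "zc m ` PiE {..<m} (\<lambda>_. {..<2::nat}) \<subseteq> {..m}" using zc_le by auto
    show ?thesis by (rule sum.group[OF f1 finite_atMost im, symmetric])
  qed
  also have "\<dots> = (\<Sum>r\<le>m. real (m choose r) * h r)"
  proof (rule sum.cong[OF refl])
    fix r
    have "(\<Sum>g\<in>{g. g \<in> PiE {..<m} (\<lambda>_. {..<2::nat}) \<and> zc m g = r}. h (zc m g)) =
        (\<Sum>g\<in>{g \<in> PiE {..<m} (\<lambda>_. {..<2::nat}). zc m g = r}. h r)"
      by (rule sum.cong) auto
    also have "\<dots> = real (m choose r) * h r" using card_zc[of m r] by simp
    finally show "(\<Sum>g\<in>{g. g \<in> PiE {..<m} (\<lambda>_. {..<2::nat}) \<and> zc m g = r}. h (zc m g)) = real (m choose r) * h r" .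
  qed
  finally show ?thesis .
qed

lemma sum_evens:
  fixes F :: "nat \<Rightarrow> real"
  assumes "\<And>r. odd r \<Longrightarrow> F r = 0"
  shows "(\<Sum>r\<le>2*n. F r) = (\<Sum>j=0..n. F (2*j))"
proof -
  have "(\<Sum>j=0..n. F (2*j)) = sum F ((\<lambda>j. 2*j) ` {0..n})"
    by (subst sum.reindex) (auto simp: inj_on_def)
  also have "\<dots> = (\<Sum>r\<le>2*n. F r)"
  proof (rule sum.mono_neutral_left)
    show "\<forall>i\<in>{..2 * n} - (\<lambda>j. 2*j) ` {0..n}. F i = 0"
    proof
      fix i assume i: "i \<in> {..2 * n} - (\<lambda>j. 2*j) ` {0..n}"
      have "odd i"
      proof
        assume "even i"
        then obtain j where "i = 2*j" by auto
        then show False using i by auto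
      qed
      then show "F i = 0" by (rule assms)
    qed
  qed auto
  finally show ?thesis ..
qed

definition Af :: "nat \<Rightarrow> (nat \<Rightarrow> real) \<Rightarrow> (nat \<Rightarrow> (nat \<Rightarrow>\<^sub>C real)) \<Rightarrow> real" where
  "Af m c v = (\<Sum>g\<in>PiE {..<m} (\<lambda>_. {..<2::nat}). c (zc m g) * (\<Prod>i<m. apply_bcontfun (v i) (g i)))"

lemma Af_slot:
  assumes "i < m"
  shows "Af m c (v(i := y)) = (\<Sum>g\<in>PiE {..<m} (\<lambda>_. {..<2::nat}).
     (c (zc m g) * (\<Prod>l\<in>{..<m} - {i}. apply_bcontfun (v l) (g l))) * apply_bcontfun y (g i))"
  unfolding Af_def
proof (rule sum.cong[OF refl])
  fix g
  have "(\<Prod>l<m. apply_bcontfun ((v(i := y)) l) (g l)) =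
      apply_bcontfun y (g i) * (\<Prod>l\<in>{..<m} - {i}. apply_bcontfun ((v(i := y)) l) (g l))"
    using assms by (subst prod.remove[of _ i]) auto
  also have "(\<Prod>l\<in>{..<m} - {i}. apply_bcontfun ((v(i := y)) l) (g l)) = (\<Prod>l\<in>{..<m} - {i}. apply_bcontfun (v l) (g l))"
    by (rule prod.cong) auto
  finally show "c (zc m g) * (\<Prod>l<m. apply_bcontfun ((v(i := y)) l) (g l)) =
      c (zc m g) * (\<Prod>l\<in>{..<m} - {i}. apply_bcontfun (v l) (g l)) * apply_bcontfun y (g i)"
    by (simp add: mult_ac)
qed

lemma Af_mlinear: "mlinear m (Af m c)"
  unfolding mlinear_def
proof (intro conjI allI impI)
  fix v w :: "nat \<Rightarrow> (nat \<Rightarrow>\<^sub>C real)" assume h: "\<forall>i<m. v i = w i"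
  show "Af m c v = Af m c w" unfolding Af_def
    by (rule sum.cong[OF refl], rule arg_cong[where f = "\<lambda>x. _ * x"], rule prod.cong) (use h in auto)
next
  fix i v assume i: "i < m"
  show "linear (\<lambda>y. Af m c (v(i := y)))"
    unfolding Af_slot[OF i]
  proof (rule linearI)
    fix a b :: "nat \<Rightarrow>\<^sub>C real"
    show "(\<Sum>g\<in>PiE {..<m} (\<lambda>_. {..<2::nat}). c (zc m g) * (\<Prod>l\<in>{..<m} - {i}. apply_bcontfun (v l) (g l)) * apply_bcontfun (a + b) (g i)) =
      (\<Sum>g\<in>PiE {..<m} (\<lambda>_. {..<2::nat}). c (zc m g) * (\<Prod>l\<in>{..<m} - {i}. apply_bcontfun (v l) (g l)) * apply_bcontfun a (g i)) +
      (\<Sum>g\<in>PiE {..<m} (\<lambda>_. {..<2::nat}). c (zc m g) * (\<Prod>l\<in>{..<m} - {i}. apply_bcontfun (v l) (g l)) * apply_bcontfun b (g i))"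
      by (simp add: distrib_left sum.distrib)
  next
    fix r :: real and a :: "nat \<Rightarrow>\<^sub>C real"
    show "(\<Sum>g\<in>PiE {..<m} (\<lambda>_. {..<2::nat}). c (zc m g) * (\<Prod>l\<in>{..<m} - {i}. apply_bcontfun (v l) (g l)) * apply_bcontfun (r *\<^sub>R a) (g i)) =
      r *\<^sub>R (\<Sum>g\<in>PiE {..<m} (\<lambda>_. {..<2::nat}). c (zc m g) * (\<Prod>l\<in>{..<m} - {i}. apply_bcontfun (v l) (g l)) * apply_bcontfun a (g i))"
      by (simp add: sum_distrib_left mult_ac)
  qed
qed

lemma zc_perm:
  assumes s: "\<tau> permutes {..<m}"
  shows "zc m (g \<circ> \<tau>) = zc m g"
proof -
  have inj: "inj_on \<tau> {i \<in> {..<m}. g (\<tau> i) = 0}"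
    using permutes_inj[OF s] by (auto simp: inj_on_def inj_def)
  have "\<tau> ` {i \<in> {..<m}. g (\<tau> i) = 0} = {l \<in> {..<m}. g l = 0}"
  proof
    show "\<tau> ` {i \<in> {..<m}. g (\<tau> i) = 0} \<subseteq> {l \<in> {..<m}. g l = 0}"
      using permutes_in_image[OF s] by auto
    show "{l \<in> {..<m}. g l = 0} \<subseteq> \<tau> ` {i \<in> {..<m}. g (\<tau> i) = 0}"
    proof
      fix l assume l: "l \<in> {l \<in> {..<m}. g l = 0}"
      have "inv \<tau> l \<in> {..<m}" using l permutes_in_image[OF permutes_inv[OF s]] by auto
      moreover have "\<tau> (inv \<tau> l) = l" using permutes_inverses(1)[OF s] by simp
      ultimately show "l \<in> \<tau> ` {i \<in> {..<m}. g (\<tau> i) = 0}" using l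
        by (intro image_eqI[where x = "inv \<tau> l"]) auto
    qed
  qed
  then show ?thesis unfolding zc_def using card_image[OF inj] by simp
qed

lemma PiE_perm:
  assumes s: "\<tau> permutes {..<m}" and g: "g \<in> PiE {..<m} (\<lambda>_. B)"
  shows "g \<circ> \<tau> \<in> PiE {..<m} (\<lambda>_. B)"
proof -
  have "(g \<circ> \<tau>) i \<in> B" if "i < m" for i
    using g permutes_in_image[OF s] that by (auto simp: PiE_iff)
  moreover have "(g \<circ> \<tau>) i = undefined" if "\<not> i < m" for i
    using g permutes_not_in[OF s] that PiE_arb[OF g, of i] by auto
  ultimately show ?thesis by (auto simp: PiE_iff extensional_def)
qed

lemma Af_sym:
  assumes s: "\<sigma> permutes {..<m}"
  shows "Af m c (v \<circ> \<sigma>) = Af m c v"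
  unfolding Af_def
proof (rule sum.reindex_bij_witness[where i = "\<lambda>g. g \<circ> \<sigma>" and j = "\<lambda>g. g \<circ> inv \<sigma>"])
  have inv: "inv \<sigma> permutes {..<m}" by (rule permutes_inv[OF s])
  fix a assume a: "a \<in> PiE {..<m} (\<lambda>_. {..<2::nat})"
  show "a \<circ> inv \<sigma> \<circ> \<sigma> = a" using permutes_inverses(2)[OF s] by (auto simp: fun_eq_iff)
  show "a \<circ> inv \<sigma> \<in> PiE {..<m} (\<lambda>_. {..<2::nat})" by (rule PiE_perm[OF inv a])
  have z: "zc m (a \<circ> inv \<sigma>) = zc m a" by (rule zc_perm[OF inv])
  have "(\<Prod>i<m. apply_bcontfun ((v \<circ> \<sigma>) i) (a i)) =
      (\<Prod>i<m. ((\<lambda>l. apply_bcontfun (v l) ((a \<circ> inv \<sigma>) l)) \<circ> \<sigma>) i)"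
    using permutes_inverses(2)[OF s] by simp
  also have "\<dots> = (\<Prod>l<m. apply_bcontfun (v l) ((a \<circ> inv \<sigma>) l))"
    by (rule prod.permute[OF s, symmetric])
  finally show "c (zc m (a \<circ> inv \<sigma>)) * (\<Prod>i<m. apply_bcontfun (v i) ((a \<circ> inv \<sigma>) i)) =
        c (zc m a) * (\<Prod>i<m. apply_bcontfun ((v \<circ> \<sigma>) i) (a i))"
    using z by simp
next
  fix b assume b: "b \<in> PiE {..<m} (\<lambda>_. {..<2::nat})"
  show "b \<circ> \<sigma> \<circ> inv \<sigma> = b" using permutes_inverses(1)[OF s] by (auto simp: fun_eq_iff)
  show "b \<circ> \<sigma> \<in> PiE {..<m} (\<lambda>_. {..<2::nat})" by (rule PiE_perm[OF s b])
qed

lemma prod_zc: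
  fixes f :: "nat \<Rightarrow> real"
  assumes g: "g \<in> PiE {..<m} (\<lambda>_. {..<2::nat})"
  shows "(\<Prod>i<m. f (g i)) = f 0 ^ zc m g * f 1 ^ (m - zc m g)"
proof -
  have "(\<Prod>i<m. f (g i)) = (\<Prod>i<m. if g i = 0 then f 0 else f 1)"
  proof (rule prod.cong[OF refl])
    fix i assume "i \<in> {..<m}"
    then have "g i < 2" using g by (auto simp: PiE_iff)
    then show "f (g i) = (if g i = 0 then f 0 else f 1)" by (cases "g i") auto
  qed
  also have "\<dots> = (\<Prod>i\<in>{..<m} \<inter> {i. g i = 0}. f 0) * (\<Prod>i\<in>{..<m} \<inter> - {i. g i = 0}. f 1)"
    by (rule prod.If_cases) simp
  also have "\<dots> = f 0 ^ card ({..<m} \<inter> {i. g i = 0}) * f 1 ^ card ({..<m} \<inter> - {i. g i = 0})"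
    by simp
  also have "card ({..<m} \<inter> {i. g i = 0}) = zc m g" unfolding zc_def by (rule arg_cong[where f = card]) auto
  also have "card ({..<m} \<inter> - {i. g i = 0}) = m - zc m g"
  proof -
    have "card ({..<m} \<inter> {i. g i = 0}) + card ({..<m} \<inter> - {i. g i = 0}) = card {..<m::nat}"
    proof -
      have "{..<m} \<inter> {i. g i = 0} \<union> {..<m} \<inter> - {i. g i = 0} = {..<m}" by auto
      then show ?thesis by (subst card_Un_disjoint[symmetric]) auto
    qed
    moreover have "card ({..<m} \<inter> {i. g i = 0}) = zc m g" unfolding zc_def by (rule arg_cong[where f = card]) auto
    ultimately show ?thesis by simp
  qed
  finally show ?thesis .
qed

lemma Af_diag:
  "Af m c (\<lambda>_. f) = (\<Sum>r\<le>m. real (m choose r) * (c r * (apply_bcontfun f 0 ^ r * apply_bcontfun f 1 ^ (m - r))))"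
proof -
  have "Af m c (\<lambda>_. f) = (\<Sum>g\<in>PiE {..<m} (\<lambda>_. {..<2::nat}).
      (\<lambda>r. c r * (apply_bcontfun f 0 ^ r * apply_bcontfun f 1 ^ (m - r))) (zc m g))"
    unfolding Af_def by (rule sum.cong[OF refl]) (simp add: prod_zc)
  also have "\<dots> = (\<Sum>r\<le>m. real (m choose r) * (c r * (apply_bcontfun f 0 ^ r * apply_bcontfun f 1 ^ (m - r))))"
    by (rule sum_zc)
  finally show ?thesis .
qed

lemma Af_eval:
  assumes J: "J \<in> PiE {..<m} (\<lambda>_. {..<2::nat})"
    and v: "\<And>i l. i < m \<Longrightarrow> apply_bcontfun (v i) l = (if l = J i then 1 else 0)"
  shows "Af m c v = c (zc m J)"
proof -
  have "Af m c v = (\<Sum>g\<in>PiE {..<m} (\<lambda>_. {..<2::nat}). if g = J then c (zc m g) else 0)"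
    unfolding Af_def
  proof (rule sum.cong[OF refl])
    fix g assume g: "g \<in> PiE {..<m} (\<lambda>_. {..<2::nat})"
    show "c (zc m g) * (\<Prod>i<m. apply_bcontfun (v i) (g i)) = (if g = J then c (zc m g) else 0)"
    proof (cases "g = J")
      case True then show ?thesis using v by simp
    next
      case False
      then obtain i where i: "i \<in> {..<m}" "g i \<noteq> J i" using PiE_ext[OF g J] by blast
      then have "(\<Prod>i<m. apply_bcontfun (v i) (g i)) = 0"
        using v by (intro prod_zero[OF finite_lessThan]) (auto intro!: bexI[of _ i])
      then show ?thesis using False by simp
    qed
  qed
  also have "\<dots> = c (zc m J)"
  proof -
    have f: "finite (PiE {..<m} (\<lambda>_. {..<2::nat}))" by (rule finite_PiE) auto
    show ?thesis using J sum.delta[OF f, of J "\<lambda>g. c (zc m g)"] by simp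
  qed
  finally show ?thesis .
qed

definition eb :: "nat \<Rightarrow> (nat \<Rightarrow>\<^sub>C real)" where
  "eb a = Bcontfun (\<lambda>l. if l = a then 1 else 0)"

lemma eb_apply: "apply_bcontfun (eb a) l = (if l = a then 1 else 0)"
proof -
  have "(\<lambda>l::nat. if l = a then 1 else (0::real)) \<in> bcontfun"
    by (rule bcontfun_normI) (auto intro: continuous_on_discrete)
  then show ?thesis unfolding eb_def by (simp add: Bcontfun_inverse)
qed

lemma cont_eval: "continuous_on UNIV (\<lambda>f::nat \<Rightarrow>\<^sub>C real. apply_bcontfun f n)"
proof (rule linear_continuous_on, rule bounded_linear_intro[where K = 1])
  fix f :: "nat \<Rightarrow>\<^sub>C real"
  show "norm (apply_bcontfun f n) \<le> norm f * 1" using norm_bounded[of f n] by simp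
qed simp_all

lemma weak1_eb: "0 \<le> weak1_norm 2 eb \<and> weak1_norm 2 eb \<le> 1"
proof -
  define S where "S = {(\<Sum>j<2. \<bar>\<phi> (eb j)\<bar>) | \<phi>::(nat \<Rightarrow>\<^sub>C real) \<Rightarrow> real. bounded_linear \<phi> \<and> onorm \<phi> \<le> 1}"
  have le1: "s \<le> 1" if sS: "s \<in> S" for s
  proof -
    obtain \<phi> where \<phi>: "s = (\<Sum>j<2. \<bar>\<phi> (eb j)\<bar>)" "bounded_linear \<phi>" "onorm \<phi> \<le> 1"
      using sS unfolding S_def by blast
    define a where "a = sgn (\<phi> (eb 0))"
    define b where "b = sgn (\<phi> (eb 1))"
    define z where "z = a *\<^sub>R eb 0 + b *\<^sub>R eb 1"
    have "\<phi> z = a * \<phi> (eb 0) + b * \<phi> (eb 1)"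
      unfolding z_def using \<phi>(2) by (simp add: linear_simps)
    also have "\<dots> = s" unfolding a_def b_def \<phi>(1) by (auto simp: sgn_if numeral_2_eq_2)
    finally have s: "s = \<phi> z" ..
    have "\<bar>apply_bcontfun z l\<bar> \<le> 1" for l
      unfolding z_def a_def b_def by (auto simp: eb_apply sgn_if)
    then have nz: "norm z \<le> 1" by (intro norm_bound) simp
    have "\<bar>\<phi> z\<bar> \<le> onorm \<phi> * norm z" using onorm[OF \<phi>(2), of z] by simp
    also have "\<dots> \<le> 1 * 1"
      using \<phi>(3) nz onorm_pos_le[OF \<phi>(2)] by (intro mult_mono) auto
    finally show ?thesis using s by simp
  qed
  have z: "0 \<in> S" unfolding S_def
    by (rule CollectI, rule exI[of _ "\<lambda>_. 0"]) (simp add: onorm_zero)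
  have bdd: "bdd_above S" using le1 by (intro bdd_aboveI[of _ 1]) auto
  have "weak1_norm 2 eb = Sup S" unfolding weak1_norm_def S_def ..
  moreover have "Sup S \<le> 1" using z le1 by (intro cSup_least) auto
  moreover have "0 \<le> Sup S" using z bdd by (rule cSup_upper)
  ultimately show ?thesis by simp
qed

lemma quad_bound:
  fixes s t :: real
  assumes "0 \<le> s" "s \<le> 1" "0 \<le> t" "t \<le> 1"
  shows "\<bar>s^2 + t^2 - 3 * s * t\<bar> \<le> 1"
proof -
  have h1: "s^2 + t^2 - 3 * s * t = (s - t)^2 - s * t" by (simp add: power2_eq_square algebra_simps)
  have h2: "s * t \<le> 1" using assms by (metis mult_le_one)
  have h3: "s^2 + t^2 - 3 * s * t \<le> 1"
  proof (cases "t \<le> s")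
    case True
    have "t * t \<le> s * t" using True assms by (intro mult_right_mono) auto
    moreover have "0 \<le> s * t" using assms by simp
    ultimately have "t^2 \<le> 3 * s * t" by (simp add: power2_eq_square)
    moreover have "s^2 \<le> 1" using assms by (simp add: power_le_one)
    ultimately show ?thesis by linarith
  next
    case False
    have "s * s \<le> s * t" using False assms by (intro mult_left_mono) auto
    moreover have "0 \<le> s * t" using assms by simp
    ultimately have "s^2 \<le> 3 * s * t" by (simp add: power2_eq_square)
    moreover have "t^2 \<le> 1" using assms by (simp add: power_le_one)
    ultimately show ?thesis by linarith
  qed
  have h4: "0 \<le> (s - t)^2" by simp
  show ?thesis unfolding abs_le_iff using h1 h2 h3 h4 by linarith
qed

lemma P_closed:
  fixes k :: nat and f :: "nat \<Rightarrow>\<^sub>C real"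
  defines "c \<equiv> (\<lambda>r. (if even r then Bcoef k (r div 2) else 0) / real (4*k choose r))"
  shows "Af (4*k) c (\<lambda>_. f) = (((apply_bcontfun f 0)^2)^2 + ((apply_bcontfun f 1)^2)^2 - 3 * (apply_bcontfun f 0)^2 * (apply_bcontfun f 1)^2) ^ k"
proof -
  let ?a = "apply_bcontfun f 0" and ?b = "apply_bcontfun f 1"
  have "Af (4*k) c (\<lambda>_. f) = (\<Sum>r\<le>4*k. real (4*k choose r) * (c r * (?a ^ r * ?b ^ (4*k - r))))"
    by (rule Af_diag)
  also have "\<dots> = (\<Sum>r\<le>2*(2*k). (if even r then Bcoef k (r div 2) else 0) * (?a ^ r * ?b ^ (4*k - r)))"
  proof (rule sum.cong)
    fix r assume "r \<in> {..2*(2*k)}"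
    then have "real (4*k choose r) \<noteq> 0" by simp
    then show "real (4*k choose r) * (c r * (?a ^ r * ?b ^ (4*k - r))) =
        (if even r then Bcoef k (r div 2) else 0) * (?a ^ r * ?b ^ (4*k - r))"
      unfolding c_def by simp
  qed simp
  also have "\<dots> = (\<Sum>j=0..2*k. (if even (2*j) then Bcoef k (2*j div 2) else 0) * (?a ^ (2*j) * ?b ^ (4*k - 2*j)))"
    by (rule sum_evens) simp
  also have "\<dots> = (\<Sum>j=0..2*k. Bcoef k j * (?a^2) ^ j * (?b^2) ^ (2*k - j))"
  proof (rule sum.cong[OF refl])
    fix j assume "j \<in> {0..2*k}"
    then have "4*k - 2*j = 2 * (2*k - j)" by auto
    then show "(if even (2*j) then Bcoef k (2*j div 2) else 0) * (?a ^ (2*j) * ?b ^ (4*k - 2*j)) =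
        Bcoef k j * (?a^2) ^ j * (?b^2) ^ (2*k - j)"
      by (simp add: power_mult)
  qed
  also have "\<dots> = ((?a^2)^2 + (?b^2)^2 - 3 * (?a^2) * (?b^2)) ^ k"
    by (rule Bcoef_identity)
  finally show ?thesis .
qed

theorem mainTheorem6:
  fixes k :: nat and L :: real
  assumes "k \<ge> 1"
    and "BH_holds TYPE(nat \<Rightarrow>\<^sub>C real) (4 * k) L"
  shows "L \<ge> (\<Sum>j = 0..2 * k. real (4 * k choose (2 * j)) *
            \<bar>Bcoef k j / real (4 * k choose (2 * j))\<bar> powr (8 * real k / (4 * real k + 1)))
          powr ((4 * real k + 1) / (8 * real k))"
proof -
  define c where "c = (\<lambda>r. (if even r then Bcoef k (r div 2) else 0) / real (4*k choose r))"
  define A where "A = Af (4*k) c"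
  define P where "P = (\<lambda>f. A (\<lambda>_. f))"
  define p where "p = 8 * real k / (4 * real k + 1)"
  define q where "q = (4 * real k + 1) / (8 * real k)"
  define G where "G = (\<Sum>j = 0..2 * k. real (4 * k choose (2 * j)) * \<bar>Bcoef k j / real (4 * k choose (2 * j))\<bar> powr p) powr q"
  have mA: "mlinear (4*k) A" unfolding A_def by (rule Af_mlinear)
  have sA: "sym_mlinear (4*k) A" unfolding sym_mlinear_def using mA Af_sym unfolding A_def by blast
  have hp: "homog_poly (4*k) P" unfolding homog_poly_def P_def using mA by blast
  have Pform: "P = (\<lambda>f. \<Sum>r\<le>4*k. real (4*k choose r) * (c r * (apply_bcontfun f 0 ^ r * apply_bcontfun f 1 ^ (4*k - r))))"
    unfolding P_def A_def by (rule ext, rule Af_diag)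
  have cont: "continuous_on UNIV P"
    unfolding Pform by (intro continuous_intros cont_eval)
  have pol: "polar (4*k) P = A" by (rule polar_eqI[OF sA]) (simp add: P_def)
  have BH: "(\<Sum>j\<in>PiE {..<4*k} (\<lambda>_. {..<2}).
            \<bar>polar (4*k) P (\<lambda>i. (\<lambda>_. eb) i (j i))\<bar> powr (2 * real (4*k) / (real (4*k) + 1)))
          powr ((real (4*k) + 1) / (2 * real (4*k)))
        \<le> L * poly_norm P * (\<Prod>i<4*k. weak1_norm 2 ((\<lambda>_. eb) i))"
    by (rule assms(2)[unfolded BH_holds_def, THEN spec[of _ P], THEN spec[of _ 2], THEN spec[of _ "\<lambda>_. eb"], THEN mp])
       (rule conjI[OF hp cont])
  have ep: "2 * real (4*k) / (real (4*k) + 1) = p" unfolding p_def by simp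
  have eq: "(real (4*k) + 1) / (2 * real (4*k)) = q" unfolding q_def by simp
  have lhs: "(\<Sum>j\<in>PiE {..<4*k} (\<lambda>_. {..<2}). \<bar>A (\<lambda>i. eb (j i))\<bar> powr p) =
      (\<Sum>j = 0..2 * k. real (4 * k choose (2 * j)) * \<bar>Bcoef k j / real (4 * k choose (2 * j))\<bar> powr p)"
  proof -
    have "(\<Sum>j\<in>PiE {..<4*k} (\<lambda>_. {..<2}). \<bar>A (\<lambda>i. eb (j i))\<bar> powr p) =
        (\<Sum>j\<in>PiE {..<4*k} (\<lambda>_. {..<2::nat}). (\<lambda>r. \<bar>c r\<bar> powr p) (zc (4*k) j))"
    proof (rule sum.cong[OF refl])
      fix J assume J: "J \<in> PiE {..<4*k} (\<lambda>_. {..<2::nat})"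
      have "A (\<lambda>i. eb (J i)) = c (zc (4*k) J)" unfolding A_def
        by (rule Af_eval[OF J]) (simp add: eb_apply)
      then show "\<bar>A (\<lambda>i. eb (J i))\<bar> powr p = (\<lambda>r. \<bar>c r\<bar> powr p) (zc (4*k) J)" by simp
    qed
    also have "\<dots> = (\<Sum>r\<le>2*(2*k). real (4*k choose r) * \<bar>c r\<bar> powr p)"
      using sum_zc[of "\<lambda>r. \<bar>c r\<bar> powr p" "4*k"] by simp
    also have "\<dots> = (\<Sum>j=0..2*k. real (4*k choose (2*j)) * \<bar>c (2*j)\<bar> powr p)"
      by (rule sum_evens) (simp add: c_def)
    also have "\<dots> = (\<Sum>j = 0..2 * k. real (4 * k choose (2 * j)) * \<bar>Bcoef k j / real (4 * k choose (2 * j))\<bar> powr p)"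
      unfolding c_def by simp
    finally show ?thesis .
  qed
  have BH2: "G \<le> L * poly_norm P * (\<Prod>i<4*k. weak1_norm 2 eb)"
    using BH unfolding pol ep eq G_def lhs by simp
  have W: "0 \<le> (\<Prod>i<4*k. weak1_norm 2 eb) \<and> (\<Prod>i<4*k. weak1_norm 2 eb) \<le> 1"
    using weak1_eb by (simp add: power_le_one)
  have Pb: "\<bar>P f\<bar> \<le> 1" if "norm f \<le> 1" for f
  proof -
    let ?s = "(apply_bcontfun f 0)^2" and ?t = "(apply_bcontfun f 1)^2"
    have a0: "\<bar>apply_bcontfun f 0\<bar> \<le> 1" using norm_bounded[of f 0] that by simp
    have a1: "\<bar>apply_bcontfun f 1\<bar> \<le> 1" using norm_bounded[of f 1] that by simp
    have s: "0 \<le> ?s" "?s \<le> 1" using power_le_one[OF abs_ge_zero a0, of 2] by (simp_all add: power2_abs)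
    have t: "0 \<le> ?t" "?t \<le> 1" using power_le_one[OF abs_ge_zero a1, of 2] by (simp_all add: power2_abs)
    have "P f = (?s^2 + ?t^2 - 3 * ?s * ?t) ^ k" unfolding P_def A_def c_def by (rule P_closed)
    then have "\<bar>P f\<bar> = \<bar>?s^2 + ?t^2 - 3 * ?s * ?t\<bar> ^ k" by (simp add: power_abs)
    also have "\<dots> \<le> 1" using quad_bound[OF s t] by (simp add: power_le_one)
    finally show ?thesis .
  qed
  have PN: "0 \<le> poly_norm P \<and> poly_norm P \<le> 1"
  proof -
    define S where "S = {\<bar>P x\<bar> | x. norm x \<le> 1}"
    have z: "\<bar>P 0\<bar> \<in> S" unfolding S_def by auto
    have le: "\<forall>s\<in>S. s \<le> 1" unfolding S_def using Pb by auto
    have "poly_norm P = Sup S" unfolding poly_norm_def S_def ..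
    moreover have "Sup S \<le> 1" using z le by (intro cSup_least) auto
    moreover have "\<bar>P 0\<bar> \<le> Sup S" using z le by (intro cSup_upper) (auto intro: bdd_aboveI[of _ 1])
    ultimately show ?thesis by linarith
  qed
  have Gpos: "0 < G"
  proof -
    have b0: "Bcoef k 0 = 1" unfolding Bcoef_def by simp
    have "1 \<le> (\<Sum>j = 0..2 * k. real (4 * k choose (2 * j)) * \<bar>Bcoef k j / real (4 * k choose (2 * j))\<bar> powr p)"
    proof -
      have "(\<lambda>j. real (4 * k choose (2 * j)) * \<bar>Bcoef k j / real (4 * k choose (2 * j))\<bar> powr p) 0 \<le>
          (\<Sum>j = 0..2 * k. real (4 * k choose (2 * j)) * \<bar>Bcoef k j / real (4 * k choose (2 * j))\<bar> powr p)"
        by (rule member_le_sum) auto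
      then show ?thesis using b0 by simp
    qed
    then show ?thesis unfolding G_def by simp
  qed
  define w where "w = poly_norm P * (\<Prod>i<4*k. weak1_norm 2 eb)"
  have w: "0 \<le> w" "w \<le> 1" unfolding w_def using PN W by (auto intro: mult_nonneg_nonneg mult_le_one)
  have "G \<le> L * w" using BH2 unfolding w_def by (simp add: mult.assoc)
  then have "0 < L" using Gpos w by (smt (verit) mult_nonpos_nonneg)
  then have "L * w \<le> L" using w by (intro mult_left_le) auto
  then have "G \<le> L" using \<open>G \<le> L * w\<close> by simp
  then show ?thesis unfolding G_def p_def q_def .
qed

end
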